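(* Let $Q:[0,\infty)\to\mathbb{R}$ be a function analytic on $[0,\infty)$ such that all moments $\int_0^\infty x^{j}x^{1/2}e^{-Q(x)}\,dx$ and $\int_{-\infty}^\infty t^{j}e^{-Q(t^2)}\,dt$, $j=0,1,2,\dots$, are finite. Let $n\ge1$, and let $x_1^{(L,\frac12)}<\dots<x_n^{(L,\frac12)}$ and $w_1^{(L,\frac12)},\dots,w_n^{(L,\frac12)}$ be the nodes and weights of the $n$-point Gaussian quadrature rule for the weight function $x^{1/2}e^{-Q(x)}$ on $[0,\infty)$. Then the nodes $x_1^{(H)}<\dots<x_{2n+1}^{(H)}$ and weights $w_1^{(H)},\dots,w_{2n+1}^{(H)}$ of the $(2n+1)$-point Gaussian quadrature rule for the weight function $e^{-Q(x^2)}$ on $(-\infty,\infty)$ are given, for $k=1,\dots,n$, by $$x_{n+1+k}^{(H)}=\sqrt{x_k^{(L,\frac12)}},\qquad w_{n+1+k}^{(H)}=\frac{w_k^{(L,\frac12)}}{2x_k^{(L,\frac12)}},$$ $$x_{n+1-k}^{(H)}=-\sqrt{x_k^{(L,\frac12)}},\qquad w_{n+1-k}^{(H)}=\frac{w_k^{(L,\frac12)}}{2x_k^{(L,\frac12)}},$$ together with $$x_{n+1}^{(H)}=0,\qquad w_{n+1}^{(H)}=\int_{-\infty}^\infty e^{-Q(t^2)}\,dt-\sum_{k=1}^n\left[w_{n+1+k}^{(H)}+w_{n+1-k}^{(H)}\right].$$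
   Context: For a positive weight function $w$ on an interval $(a,b)$ with finite moments, the $m$-point Gaussian quadrature rule consists of nodes $x_1<\dots<x_m$ (the zeros of the degree-$m$ orthogonal polynomial with respect to $w$) and positive weights $w_1,\dots,w_m$ such that $\int_a^b f(x)w(x)\,dx=\sum_{k=1}^m w_k f(x_k)$ for all polynomials $f$ of degree at most $2m-1$. *)

theory Defs
  imports "HOL-Analysis.Analysis" "HOL-Computational_Algebra.Polynomial"
begin

definition real_analytic_on :: "(real \<Rightarrow> real) \<Rightarrow> real set \<Rightarrow> bool" where
  "real_analytic_on f S \<longleftrightarrow>
     (\<forall>x0\<in>S. \<exists>r>0. \<exists>a :: nat \<Rightarrow> real.
        \<forall>x\<in>S. \<bar>x - x0\<bar> < r \<longrightarrow> (\<lambda>k. a k * (x - x0) ^ k) sums f x)"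

definition gauss_rule ::
  "(real \<Rightarrow> real) \<Rightarrow> real set \<Rightarrow> nat \<Rightarrow> (nat \<Rightarrow> real) \<Rightarrow> (nat \<Rightarrow> real) \<Rightarrow> bool" where
  "gauss_rule w S m x c \<longleftrightarrow>
     (\<forall>i\<in>{1..<m}. x i < x (i + 1)) \<and>
     (\<forall>i\<in>{1..m}. x i \<in> S \<and> c i > 0) \<and>
     (\<forall>p :: real poly. degree p \<le> 2 * m - 1 \<longrightarrow>
        set_integrable lborel S (\<lambda>t. poly p t * w t) \<and>
        (LINT t:S|lborel. poly p t * w t) = (\<Sum>k=1..m. c k * poly p (x k)))"

end

theory Submission
  imports Defs
begin


lemma Q_cont:
  assumes "real_analytic_on Q {0..}" "y > 0"
  shows "isCont Q y"
proof -
  obtain r a where r: "r > 0" and a: "\<forall>x\<in>{0..}. \<bar>x - y\<bar> < r \<longrightarrow> (\<lambda>k. a k * (x - y) ^ k) sums Q x"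
    using assms(1) assms(2) unfolding real_analytic_on_def
    by (metis atLeast_iff less_eq_real_def)
  define s where "s = min r y"
  have s: "s > 0" using r assms by (simp add: s_def)
  define P where "P = (\<lambda>h::real. \<Sum>k. a k * h ^ k)"
  have eq: "Q x = P (x - y)" if "\<bar>x - y\<bar> < s" for x
  proof -
    have "x \<in> {0..}" using that s_def by auto
    moreover have "\<bar>x - y\<bar> < r" using that s_def by auto
    ultimately show ?thesis using a sums_unique P_def by metis
  qed
  have summ: "summable (\<lambda>k. a k * (s/2) ^ k)"
  proof -
    have "(\<lambda>k. a k * ((y + s/2) - y) ^ k) sums Q (y + s/2)"
    proof -
      have "y + s/2 \<in> {0..}" "\<bar>(y + s/2) - y\<bar> < r" using s s_def assms r by auto
      then show ?thesis using a by blast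
    qed
    then show ?thesis by (auto simp: sums_iff)
  qed
  have c0: "isCont P 0" unfolding P_def
    by (rule isCont_powser[OF summ]) (use s in auto)
  have "isCont (\<lambda>x. P (x - y)) y"
    using continuous_at_compose[of y "\<lambda>x. x - y" P] c0 by (simp add: o_def)
  moreover have "eventually (\<lambda>x. Q x = P (x - y)) (nhds y)"
    unfolding eventually_nhds_metric using s by (auto intro!: exI[of _ s] eq simp: dist_real_def)
  ultimately show ?thesis using isCont_cong[of Q "\<lambda>x. P (x - y)" y] by blast
qed

lemma subst_lemma:
  assumes an: "real_analytic_on Q {0..}"
    and momH: "\<And>j::nat. integrable lborel (\<lambda>t. t ^ j * exp (- Q (t\<^sup>2)))"
  shows "set_integrable lborel {0<..} (\<lambda>x. x ^ i * sqrt x * exp (- Q x))"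
    "(LINT x:{0<..}|lborel. x ^ i * sqrt x * exp (- Q x))
       = (LINT t:{0<..}|lborel. 2 * (t ^ (2*i+2) * exp (- Q (t\<^sup>2))))"
proof -
  define f where "f = (\<lambda>x::real. x ^ i * sqrt x * exp (- Q x))"
  have i1: "set_integrable lborel {0<..} (\<lambda>t. 2 * (t ^ (2*i+2) * exp (- Q (t\<^sup>2))))"
    unfolding set_integrable_def
    using integrable_mult_indicator[of "{0<..}" lborel, OF _ integrable_mult_right[OF momH[of "2*i+2"], of 2]]
    by simp
  have eqf: "f (x\<^sup>2) * (2 * x) = 2 * (x ^ (2*i+2) * exp (- Q (x\<^sup>2)))" if "x > 0" for x
  proof -
    have "(x\<^sup>2) ^ i = x ^ (2*i)" by (simp add: power_mult)
    moreover have "x ^ (2*i+2) = x ^ (2*i) * x * x" by (simp add: power_add power2_eq_square)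
    ultimately show ?thesis using that by (simp add: f_def real_sqrt_abs)
  qed
  have i2: "set_integrable lborel (einterval 0 \<infinity>) (\<lambda>x. f (x\<^sup>2) * (2 * x))"
    using i1 by (subst set_integrable_cong[OF refl, of _ "{0<..}" _ "\<lambda>t. 2 * (t ^ (2*i+2) * exp (- Q (t\<^sup>2)))"])
      (auto simp: eqf zero_ereal_def[symmetric] einterval_iff)
  have contf: "isCont f (x\<^sup>2)" if "x > 0" for x
    unfolding f_def using Q_cont[OF an, of "x\<^sup>2"] that
    by (auto intro!: continuous_intros)
  note S = interval_integral_substitution_nonneg[of 0 \<infinity> "\<lambda>x. x\<^sup>2" "\<lambda>x. 2 * x" f 0 \<infinity>]
  have A: "((ereal \<circ> (\<lambda>x. x\<^sup>2) \<circ> real_of_ereal) \<longlongrightarrow> 0) (at_right (0::ereal))"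
  proof -
    have "((\<lambda>x::real. x\<^sup>2) \<longlongrightarrow> 0) (at_right 0)"
      by (auto intro!: tendsto_eq_intros)
    then show ?thesis unfolding zero_ereal_def
      by (simp add: comp_assoc ereal_tendsto_simps1 ereal_tendsto_simps2 flip: comp_assoc)
  qed
  have B: "((ereal \<circ> (\<lambda>x. x\<^sup>2) \<circ> real_of_ereal) \<longlongrightarrow> \<infinity>) (at_left (\<infinity>::ereal))"
  proof -
    have "filterlim (\<lambda>x::real. x\<^sup>2) at_top at_top"
      by (rule filterlim_pow_at_top[OF _ filterlim_ident]) auto
    then show ?thesis
      by (simp add: ereal_tendsto_simps1 ereal_tendsto_simps2 flip: comp_assoc)
  qed
  have pre: "set_integrable lborel (einterval 0 \<infinity>) f \<and>
     (LBINT x=0..\<infinity>. f x) = (LBINT x=0..\<infinity>. f (x\<^sup>2) * (2 * x))"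
    apply (rule conjI)
    apply (rule S(1))
    prefer 10
    apply (rule S(2))
    using A B i2 contf
    by (auto intro!: derivative_eq_intros simp: zero_ereal_def[symmetric] f_def)
  show "set_integrable lborel {0<..} (\<lambda>x. x ^ i * sqrt x * exp (- Q x))"
    using pre by (simp add: f_def zero_ereal_def)
  show "(LINT x:{0<..}|lborel. x ^ i * sqrt x * exp (- Q x))
       = (LINT t:{0<..}|lborel. 2 * (t ^ (2*i+2) * exp (- Q (t\<^sup>2))))"
  proof -
    have "(LINT x:{0<..}|lborel. f (x\<^sup>2) * (2 * x)) = (LINT t:{0<..}|lborel. 2 * (t ^ (2*i+2) * exp (- Q (t\<^sup>2))))"
      by (rule set_lebesgue_integral_cong) (auto simp: eqf)
    then show ?thesis using pre unfolding zero_ereal_def interval_integral_to_infinity_eq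
      by (simp add: f_def)
  qed
qed



lemma integral_reflect: "integral\<^sup>L lborel (f::real\<Rightarrow>real) = integral\<^sup>L lborel (\<lambda>x. f (- x))"
  using lborel_integral_real_affine[of "-1" f 0] by simp

lemma integral_odd:
  fixes h :: "real \<Rightarrow> real"
  assumes "\<And>x. h (- x) = - h x"
  shows "integral\<^sup>L lborel h = 0"
proof -
  have "integral\<^sup>L lborel h = integral\<^sup>L lborel (\<lambda>x. - h x)"
    using integral_reflect[of h] assms by simp
  also have "\<dots> = - integral\<^sup>L lborel h" by simp
  finally show ?thesis by simp
qed

lemma integral_even:
  fixes h :: "real \<Rightarrow> real"
  assumes int: "integrable lborel h" and ev: "\<And>x. h (- x) = h x" and h0: "h 0 = 0"
  shows "integral\<^sup>L lborel h = 2 * (LINT x:{0<..}|lborel. h x)"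
proof -
  have i1: "integrable lborel (\<lambda>x. indicator {0<..} x * h x)"
    using integrable_mult_indicator[OF _ int, of "{0<..}"] by simp
  have i2: "integrable lborel (\<lambda>x. indicator {..<0} x * h x)"
    using integrable_mult_indicator[OF _ int, of "{..<0}"] by simp
  have split: "h x = indicator {0<..} x * h x + indicator {..<0} x * h x" for x
    using h0 by (cases "x = 0") (auto simp: indicator_def)
  have "integral\<^sup>L lborel h = integral\<^sup>L lborel (\<lambda>x. indicator {0<..} x * h x + indicator {..<0} x * h x)"
  proof -
    have hs: "h = (\<lambda>x. indicator {0<..} x * h x + indicator {..<0} x * h x)" by (rule ext, rule split)
    show ?thesis by (rule arg_cong[OF hs])
  qed
  also have "\<dots> = integral\<^sup>L lborel (\<lambda>x. indicator {0<..} x * h x) + integral\<^sup>L lborel (\<lambda>x. indicator {..<0} x * h x)"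
    by (rule Bochner_Integration.integral_add[OF i1 i2])
  also have "integral\<^sup>L lborel (\<lambda>x. indicator {..<0} x * h x) = integral\<^sup>L lborel (\<lambda>x. indicator {..<0} (-x) * h (-x))"
    by (rule integral_reflect)
  also have "(\<lambda>x. indicator {..<0} (-x) * h (-x)) = (\<lambda>x. indicator {0<..} x * h x :: real)"
    using ev by (auto simp: indicator_def)
  finally show ?thesis by (simp add: set_lebesgue_integral_def)
qed

lemma poly_int_pos:
  fixes q :: "real poly" and E :: "real \<Rightarrow> real"
  assumes int: "integrable lborel (\<lambda>t. (poly q t)\<^sup>2 * E t)" and Epos: "\<And>t. E t > 0"
    and q: "q \<noteq> 0"
  shows "integral\<^sup>L lborel (\<lambda>t. (poly q t)\<^sup>2 * E t) > 0"
proof -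
  have nn: "AE t in lborel. 0 \<le> (poly q t)\<^sup>2 * E t"
    by (intro AE_I2 mult_nonneg_nonneg zero_le_power2 less_imp_le[OF Epos])
  have ge: "integral\<^sup>L lborel (\<lambda>t. (poly q t)\<^sup>2 * E t) \<ge> 0"
    using nn by (rule integral_nonneg_AE)
  have "integral\<^sup>L lborel (\<lambda>t. (poly q t)\<^sup>2 * E t) \<noteq> 0"
  proof
    assume "integral\<^sup>L lborel (\<lambda>t. (poly q t)\<^sup>2 * E t) = 0"
    then have ae: "AE t in lborel. (poly q t)\<^sup>2 * E t = 0"
      using integral_nonneg_eq_0_iff_AE[OF int nn] by simp
    have ae2: "AE t in lborel. t \<notin> {x. poly q x = 0}"
      by (intro AE_not_in finite_imp_null_set_lborel poly_roots_finite q)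
    have a1: "AE t in lborel. poly q t = 0"
      using ae
    proof (rule AE_mp)
      show "AE t in lborel. (poly q t)\<^sup>2 * E t = 0 \<longrightarrow> poly q t = 0"
        using Epos by (intro AE_I2 impI) (metis mult_eq_0_iff order_less_irrefl power_eq_0_iff)
    qed
    have "AE t in lborel. poly q t = 0 \<and> t \<notin> {x. poly q x = 0}"
      by (rule AE_conjI[OF a1 ae2])
    then have "AE t in (lborel::real measure). False" by simp
    then have "ae_filter (lborel::real measure) = bot" using trivial_limit_def by blast
    then show False using ae_filter_eq_bot_iff[of "lborel::real measure"] by simp
  qed
  with ge show ?thesis by simp
qed

lemma poly_integral:
  fixes E :: "real \<Rightarrow> real"
  assumes mom: "\<And>j. integrable lborel (\<lambda>t. t ^ j * E t)"
  shows "integrable lborel (\<lambda>t. poly p t * E t)"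
    "integral\<^sup>L lborel (\<lambda>t. poly p t * E t) = (\<Sum>j\<le>degree p. coeff p j * integral\<^sup>L lborel (\<lambda>t. t ^ j * E t))"
proof -
  have eq: "(\<lambda>t. poly p t * E t) = (\<lambda>t. \<Sum>j\<le>degree p. coeff p j * (t ^ j * E t))"
    by (auto simp: poly_altdef sum_distrib_right mult.assoc)
  show "integrable lborel (\<lambda>t. poly p t * E t)"
    unfolding eq by (intro Bochner_Integration.integrable_sum integrable_mult_right mom)
  show "integral\<^sup>L lborel (\<lambda>t. poly p t * E t) = (\<Sum>j\<le>degree p. coeff p j * integral\<^sup>L lborel (\<lambda>t. t ^ j * E t))"
    unfolding eq by (subst Bochner_Integration.integral_sum) (auto intro!: integrable_mult_right mom)
qed

lemma poly_rule_sum: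
  fixes c x :: "nat \<Rightarrow> real" and p :: "real poly"
  shows   "(\<Sum>k\<in>A. c k * poly p (x k)) = (\<Sum>j\<le>degree p. coeff p j * (\<Sum>k\<in>A. c k * x k ^ j))"
proof -
  have "(\<Sum>k\<in>A. c k * poly p (x k)) = (\<Sum>k\<in>A. \<Sum>j\<le>degree p. coeff p j * (c k * x k ^ j))"
    by (simp add: poly_altdef sum_distrib_left mult_ac)
  also have "\<dots> = (\<Sum>j\<le>degree p. \<Sum>k\<in>A. coeff p j * (c k * x k ^ j))" by (rule sum.swap)
  also have "\<dots> = (\<Sum>j\<le>degree p. coeff p j * (\<Sum>k\<in>A. c k * x k ^ j))" by (simp add: sum_distrib_left)
  finally show ?thesis .
qed

lemma sum_sym:
  fixes f :: "nat \<Rightarrow> 'a::comm_monoid_add"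
  shows "(\<Sum>i=1..2*n+1. f i) = f (n+1) + (\<Sum>k=1..n. f (n+1+k) + f (n+1-k))"
proof -
  have set: "{1..2*n+1} = insert (n+1) ((\<lambda>k. n+1+k) ` {1..n} \<union> (\<lambda>k. n+1-k) ` {1..n})"
  proof (rule set_eqI, rule iffI)
    fix i assume i: "i \<in> {1..2*n+1}"
    show "i \<in> insert (n+1) ((\<lambda>k. n+1+k) ` {1..n} \<union> (\<lambda>k. n+1-k) ` {1..n})"
    proof (cases "i > n+1")
      case True then have "i = n+1+(i-n-1)" "i - n - 1 \<in> {1..n}" using i by auto
      then show ?thesis by blast
    next
      case False
      show ?thesis
      proof (cases "i = n+1")
        case False
        then have "i = n+1-(n+1-i)" "n+1-i \<in> {1..n}" using i \<open>\<not> i > n+1\<close> by auto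
        then show ?thesis by blast
      qed simp
    qed
  qed auto
  have inj1: "inj_on (\<lambda>k. n+1+k) {1..n}" by (auto simp: inj_on_def)
  have inj2: "inj_on (\<lambda>k. n+1-k) {1..n}" by (auto simp: inj_on_def)
  have "(\<Sum>i=1..2*n+1. f i) = f (n+1) + (\<Sum>i\<in>(\<lambda>k. n+1+k) ` {1..n} \<union> (\<lambda>k. n+1-k) ` {1..n}. f i)"
    unfolding set by (subst sum.insert) auto
  also have "\<dots> = f (n+1) + ((\<Sum>i\<in>(\<lambda>k. n+1+k) ` {1..n}. f i) + (\<Sum>i\<in>(\<lambda>k. n+1-k) ` {1..n}. f i))"
    by (subst sum.union_disjoint) auto
  also have "\<dots> = f (n+1) + (\<Sum>k=1..n. f (n+1+k) + f (n+1-k))"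
    by (subst sum.reindex[OF inj1], subst sum.reindex[OF inj2]) (simp add: sum.distrib o_def)
  finally show ?thesis .
qed



lemma adj_mono:
  fixes x :: "nat \<Rightarrow> real"
  assumes "\<forall>i\<in>{1..<m}. x i < x (i + 1)" "1 \<le> i" "i < j" "j \<le> m"
  shows "x i < x j"
  using assms(3,4)
proof (induction j)
  case 0 then show ?case by simp
next
  case (Suc j)
  have jm: "j \<in> {1..<m}" using Suc.prems assms(2) by auto
  show ?case
  proof (cases "i < j")
    case True
    then have "x i < x j" using Suc by auto
    also have "x j < x (Suc j)" using assms(1) jm by auto
    finally show ?thesis .
  next
    case False
    then have "i = j" using Suc.prems by auto
    then show ?thesis using assms(1) jm by auto
  qed
qed

definition nodepoly :: "(nat \<Rightarrow> real) \<Rightarrow> nat set \<Rightarrow> real poly" where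
  "nodepoly x A = (\<Prod>k\<in>A. [:- x k, 1:])"

lemma poly_nodepoly: "poly (nodepoly x A) t = (\<Prod>k\<in>A. t - x k)"
  by (simp add: nodepoly_def poly_prod)

lemma degree_nodepoly: "finite A \<Longrightarrow> degree (nodepoly x A) = card A"
  unfolding nodepoly_def by (subst degree_prod_sum_eq) auto

lemma lead_nodepoly: "lead_coeff (nodepoly x A) = 1"
  unfolding nodepoly_def by (simp add: lead_coeff_prod)

lemma nodepoly_root: "finite A \<Longrightarrow> k \<in> A \<Longrightarrow> poly (nodepoly x A) (x k) = 0"
  unfolding poly_nodepoly by (rule prod_zero) auto

lemma gauss_nodes_sub:
  assumes A: "gauss_rule w S m x c" and B: "gauss_rule w S m y d" and k: "k \<in> {1..m}"
  shows "\<exists>j\<in>{1..m}. x k = y j"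
proof -
  let ?I = "{1..m}"
  have m: "m \<ge> 1" using k by auto
  define Wx where "Wx = nodepoly x ?I"
  define Wy where "Wy = nodepoly y ?I"
  define r where "r = Wx - Wy"
  have dWx: "degree Wx = m" and dWy: "degree Wy = m"
    by (simp_all add: Wx_def Wy_def degree_nodepoly)
  have cWx: "coeff Wx m = 1" and cWy: "coeff Wy m = 1"
    using lead_nodepoly dWx dWy Wx_def Wy_def by metis+
  have dr: "degree r \<le> m - 1"
  proof (rule degree_le, intro allI impI)
    fix i assume "m - 1 < i"
    then have "i = m \<or> i > m" using m by auto
    then show "coeff r i = 0"
      using cWx cWy dWx dWy by (auto simp: r_def coeff_eq_0)
  qed
  have exA: "\<And>p. degree p \<le> 2 * m - 1 \<Longrightarrow> set_integrable lborel S (\<lambda>t. poly p t * w t) \<and>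
        (LINT t:S|lborel. poly p t * w t) = (\<Sum>k=1..m. c k * poly p (x k))"
    using A unfolding gauss_rule_def by blast
  have exB: "\<And>p. degree p \<le> 2 * m - 1 \<Longrightarrow> set_integrable lborel S (\<lambda>t. poly p t * w t) \<and>
        (LINT t:S|lborel. poly p t * w t) = (\<Sum>k=1..m. d k * poly p (y k))"
    using B unfolding gauss_rule_def by blast
  have deg1: "degree (r * Wx) \<le> 2 * m - 1"
    using degree_mult_le[of r Wx] dr dWx m by linarith
  have deg2: "degree (r * Wy) \<le> 2 * m - 1"
    using degree_mult_le[of r Wy] dr dWy m by linarith
  have deg3: "degree (r * r) \<le> 2 * m - 1"
    using degree_mult_le[of r r] dr m by linarith
  have I1: "(LINT t:S|lborel. poly (r * Wx) t * w t) = 0"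
    using exA[OF deg1] by (simp add: Wx_def nodepoly_root)
  have I2: "(LINT t:S|lborel. poly (r * Wy) t * w t) = 0"
    using exB[OF deg2] by (simp add: Wy_def nodepoly_root)
  have rr: "r * r = r * Wx - r * Wy" by (simp add: r_def algebra_simps)
  have "(LINT t:S|lborel. poly (r * r) t * w t)
      = (LINT t:S|lborel. poly (r * Wx) t * w t - poly (r * Wy) t * w t)"
    by (simp add: rr algebra_simps)
  also have "\<dots> = (LINT t:S|lborel. poly (r * Wx) t * w t) - (LINT t:S|lborel. poly (r * Wy) t * w t)"
    by (rule set_integral_diff) (use exA[OF deg1] exB[OF deg2] in auto)
  finally have "(LINT t:S|lborel. poly (r * r) t * w t) = 0" using I1 I2 by simp
  then have s0: "(\<Sum>k=1..m. c k * (poly r (x k))\<^sup>2) = 0"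
    using exA[OF deg3] by (simp add: power2_eq_square)
  have cpos: "\<And>k. k \<in> ?I \<Longrightarrow> c k > 0" using A unfolding gauss_rule_def by blast
  have "\<forall>k\<in>?I. c k * (poly r (x k))\<^sup>2 = 0"
  proof -
    have nn: "\<And>k. k \<in> ?I \<Longrightarrow> 0 \<le> c k * (poly r (x k))\<^sup>2"
      using cpos by (simp add: less_imp_le)
    show ?thesis using s0 sum_nonneg_eq_0_iff[of ?I "\<lambda>k. c k * (poly r (x k))\<^sup>2"] nn by auto
  qed
  then have "c k * (poly r (x k))\<^sup>2 = 0" using k by blast
  then have "poly r (x k) = 0" using cpos[OF k] by simp
  then have "poly Wy (x k) = 0"
    using k by (simp add: r_def Wx_def nodepoly_root)
  then show ?thesis unfolding Wy_def poly_nodepoly by (simp add: prod_zero_iff)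
qed

lemma enum_eq:
  fixes x y :: "nat \<Rightarrow> real"
  assumes mx: "\<forall>i\<in>{1..<m}. x i < x (i + 1)" and my: "\<forall>i\<in>{1..<m}. y i < y (i + 1)"
    and xy: "\<forall>k\<in>{1..m}. \<exists>j\<in>{1..m}. x k = y j"
    and yx: "\<forall>k\<in>{1..m}. \<exists>j\<in>{1..m}. y k = x j"
  shows "i \<in> {1..m} \<Longrightarrow> x i = y i"
proof (induction i rule: less_induct)
  case (less i)
  obtain k where k: "k \<in> {1..m}" "x i = y k" using xy less.prems by blast
  obtain l where l: "l \<in> {1..m}" "y i = x l" using yx less.prems by blast
  have ki: "\<not> k < i"
  proof
    assume "k < i"
    then have "x k = y k" using less.IH[of k] k by auto
    moreover have "x k < x i" using adj_mono[OF mx, of k i] \<open>k < i\<close> k less.prems by auto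
    ultimately show False using k by simp
  qed
  have li: "\<not> l < i"
  proof
    assume "l < i"
    then have "x l = y l" using less.IH[of l] l by auto
    moreover have "y l < y i" using adj_mono[OF my, of l i] \<open>l < i\<close> l less.prems by auto
    ultimately show False using l by simp
  qed
  show ?case
  proof (rule ccontr)
    assume ne: "x i \<noteq> y i"
    then have "k \<noteq> i" using k by auto
    with ki have "i < k" by auto
    then have "y i < y k" using adj_mono[OF my, of i k] k less.prems by auto
    moreover have "x i \<le> x l"
      using li adj_mono[OF mx, of i l] l less.prems by (cases "i = l") auto
    ultimately show False using k l by simp
  qed
qed

lemma gauss_unique:
  assumes A: "gauss_rule w S m x c" and B: "gauss_rule w S m y d" and i: "i \<in> {1..m}"
  shows "x i = y i \<and> c i = d i"
proof -
  let ?I = "{1..m}"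
  have xy: "\<forall>k\<in>?I. x k = y k"
    using enum_eq[of m x y] gauss_nodes_sub[OF A B] gauss_nodes_sub[OF B A] A B
    unfolding gauss_rule_def by blast
  define L where "L = nodepoly x (?I - {i})"
  have m: "m \<ge> 1" using i by auto
  have dL: "degree L \<le> 2 * m - 1"
    using degree_nodepoly[of "?I - {i}" x] i m by (simp add: L_def)
  have exA: "(LINT t:S|lborel. poly L t * w t) = (\<Sum>k=1..m. c k * poly L (x k))"
    using A dL unfolding gauss_rule_def by blast
  have exB: "(LINT t:S|lborel. poly L t * w t) = (\<Sum>k=1..m. d k * poly L (y k))"
    using B dL unfolding gauss_rule_def by blast
  have z: "poly L (x k) = 0" if "k \<in> ?I" "k \<noteq> i" for k
    unfolding L_def using that by (intro nodepoly_root) auto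
  have sA: "(\<Sum>k=1..m. c k * poly L (x k)) = c i * poly L (x i)"
    using i z by (subst sum.remove[of _ i]) auto
  have sB: "(\<Sum>k=1..m. d k * poly L (y k)) = d i * poly L (x i)"
    using i z xy by (subst sum.remove[of _ i]) auto
  have inj: "x k \<noteq> x i" if "k \<in> ?I" "k \<noteq> i" for k
  proof -
    have "k < i \<or> i < k" using that by auto
    then show ?thesis
      using adj_mono[of m x k i] adj_mono[of m x i k] A that i unfolding gauss_rule_def
      by auto
  qed
  have nz: "poly L (x i) \<noteq> 0"
  proof -
    have "\<forall>a\<in>?I-{i}. x i - x a \<noteq> 0" using inj by fastforce
    then show ?thesis unfolding L_def poly_nodepoly by (subst prod_zero_iff) auto
  qed
  have "c i * poly L (x i) = d i * poly L (x i)" using exA exB sA sB by simp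
  then have "c i = d i" using nz by simp
  then show ?thesis using xy i by blast
qed



lemma moments:
  fixes Q :: "real \<Rightarrow> real" and n :: nat and xL wL xH wH :: "nat \<Rightarrow> real"
  assumes analytic: "real_analytic_on Q {0..}"
    and momH: "\<And>j::nat. integrable lborel (\<lambda>t. t ^ j * exp (- Q (t\<^sup>2)))"
    and L: "gauss_rule (\<lambda>x. sqrt x * exp (- Q x)) {0<..} n xL wL"
    and xp: "\<forall>k\<in>{1..n}.
                 xH (n + 1 + k) = sqrt (xL k) \<and> wH (n + 1 + k) = wL k / (2 * xL k) \<and>
                 xH (n + 1 - k) = - sqrt (xL k) \<and> wH (n + 1 - k) = wL k / (2 * xL k)"
    and x0: "xH (n + 1) = 0"
    and w0: "wH (n + 1) = (LINT t|lborel. exp (- Q (t\<^sup>2)))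
                           - (\<Sum>k=1..n. wH (n + 1 + k) + wH (n + 1 - k))"
    and j: "j \<le> 4 * n + 1"
  shows "integral\<^sup>L lborel (\<lambda>t. t ^ j * exp (- Q (t\<^sup>2))) = (\<Sum>i=1..2*n+1. wH i * xH i ^ j)"
proof -
  define E where "E = (\<lambda>t. exp (- Q (t\<^sup>2)))"
  define a where "a = (\<lambda>k. wL k / (2 * xL k))"
  have xLpos: "\<And>k. k \<in> {1..n} \<Longrightarrow> xL k > 0" using L unfolding gauss_rule_def by auto
  have exL: "\<And>p. degree p \<le> 2 * n - 1 \<Longrightarrow>
        (LINT t:{0<..}|lborel. poly p t * (sqrt t * exp (- Q t))) = (\<Sum>k=1..n. wL k * poly p (xL k))"
    using L unfolding gauss_rule_def by blast
  have rhs: "(\<Sum>i=1..2*n+1. wH i * xH i ^ j) = wH (n+1) * 0 ^ j +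
       (\<Sum>k=1..n. a k * sqrt (xL k) ^ j + a k * (- sqrt (xL k)) ^ j)"
    unfolding sum_sym[of "\<lambda>i. wH i * xH i ^ j"] using xp x0
    by (intro arg_cong2[where f="(+)"] sum.cong) (auto simp: a_def)
  consider "j = 0" | "odd j" | i where "j = 2 * i + 2"
  proof -
    have "j = 0 \<or> odd j \<or> (\<exists>i. j = 2 * i + 2)" by presburger
    then show thesis using that by blast
  qed
  then show ?thesis
  proof cases
    case 1
    then show ?thesis unfolding rhs using w0 xp
      by (simp add: a_def sum.distrib sum_distrib_left)
  next
    case 2
    have "integral\<^sup>L lborel (\<lambda>t. t ^ j * E t) = 0"
      by (rule integral_odd) (use 2 in \<open>simp add: E_def\<close>)
    moreover have "j > 0" using 2 by (cases j) auto
    ultimately show ?thesis unfolding rhs using 2 by (simp add: E_def)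
  next
    case 3
    have i: "i \<le> 2 * n - 1" using j 3 by linarith
    have "integral\<^sup>L lborel (\<lambda>t. t ^ j * E t) = 2 * (LINT t:{0<..}|lborel. t ^ j * E t)"
      apply (rule integral_even)
      subgoal using momH[of j] by (simp add: E_def)
      subgoal using 3 by (simp add: E_def)
      subgoal using 3 by (simp add: E_def)
      done
    also have "\<dots> = (LINT t:{0<..}|lborel. 2 * (t ^ (2*i+2) * E t))"
      using 3 by simp
    also have "\<dots> = (LINT x:{0<..}|lborel. x ^ i * sqrt x * exp (- Q x))"
      using subst_lemma(2)[OF analytic momH, of i] by (simp add: E_def)
    also have "\<dots> = (LINT t:{0<..}|lborel. poly (monom 1 i) t * (sqrt t * exp (- Q t)))"
      by (simp add: poly_monom mult.assoc)
    also have "\<dots> = (\<Sum>k=1..n. wL k * poly (monom 1 i) (xL k))"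
      by (rule exL) (use i degree_monom_le[of "1::real" i] in linarith)
    also have "\<dots> = (\<Sum>k=1..n. a k * sqrt (xL k) ^ j + a k * (- sqrt (xL k)) ^ j)"
    proof (rule sum.cong[OF refl])
      fix k assume k: "k \<in> {1..n}"
      have "sqrt (xL k) ^ j = xL k ^ (i + 1)"
      proof -
        have "sqrt (xL k) ^ j = (sqrt (xL k) ^ 2) ^ (i + 1)"
          unfolding 3 power_mult[symmetric] by (simp add: algebra_simps)
        then show ?thesis using xLpos[OF k] by simp
      qed
      then show "wL k * poly (monom 1 i) (xL k) = a k * sqrt (xL k) ^ j + a k * (- sqrt (xL k)) ^ j"
        using 3 xLpos[OF k] by (simp add: a_def poly_monom field_simps)
    qed
    finally show ?thesis unfolding rhs using 3 by (simp add: E_def)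
  qed
qed



lemma construct:
  fixes Q :: "real \<Rightarrow> real" and n :: nat and xL wL xH wH :: "nat \<Rightarrow> real"
  assumes analytic: "real_analytic_on Q {0..}"
    and momH: "\<And>j::nat. integrable lborel (\<lambda>t. t ^ j * exp (- Q (t\<^sup>2)))"
    and n: "n \<ge> 1"
    and L: "gauss_rule (\<lambda>x. sqrt x * exp (- Q x)) {0<..} n xL wL"
    and xp: "\<forall>k\<in>{1..n}.
                 xH (n + 1 + k) = sqrt (xL k) \<and> wH (n + 1 + k) = wL k / (2 * xL k) \<and>
                 xH (n + 1 - k) = - sqrt (xL k) \<and> wH (n + 1 - k) = wL k / (2 * xL k)"
    and x0: "xH (n + 1) = 0"
    and w0: "wH (n + 1) = (LINT t|lborel. exp (- Q (t\<^sup>2)))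
                           - (\<Sum>k=1..n. wH (n + 1 + k) + wH (n + 1 - k))"
  shows "gauss_rule (\<lambda>t. exp (- Q (t\<^sup>2))) UNIV (2 * n + 1) xH wH"
proof -
  define E where "E = (\<lambda>t. exp (- Q (t\<^sup>2)))"
  have xLpos: "\<And>k. k \<in> {1..n} \<Longrightarrow> xL k > 0" using L unfolding gauss_rule_def by auto
  have wLpos: "\<And>k. k \<in> {1..n} \<Longrightarrow> wL k > 0" using L unfolding gauss_rule_def by auto
  have xLmono: "\<And>k. k \<in> {1..<n} \<Longrightarrow> xL k < xL (k + 1)" using L unfolding gauss_rule_def by auto
  have mom: "\<And>j. integrable lborel (\<lambda>t. t ^ j * E t)" using momH by (simp add: E_def)
  have exact: "set_integrable lborel UNIV (\<lambda>t. poly p t * E t) \<and>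
        (LINT t:UNIV|lborel. poly p t * E t) = (\<Sum>k=1..2*n+1. wH k * poly p (xH k))"
    if dp: "degree p \<le> 2 * (2 * n + 1) - 1" for p
  proof
    show "set_integrable lborel UNIV (\<lambda>t. poly p t * E t)"
      using poly_integral(1)[OF mom] by (simp add: set_integrable_def)
    have "(LINT t:UNIV|lborel. poly p t * E t) = integral\<^sup>L lborel (\<lambda>t. poly p t * E t)"
      by (simp add: set_lebesgue_integral_def)
    also have "\<dots> = (\<Sum>j\<le>degree p. coeff p j * integral\<^sup>L lborel (\<lambda>t. t ^ j * E t))"
      by (rule poly_integral(2)[OF mom])
    also have "\<dots> = (\<Sum>j\<le>degree p. coeff p j * (\<Sum>k=1..2*n+1. wH k * xH k ^ j))"
    proof (rule sum.cong[OF refl])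
      fix j assume "j \<in> {..degree p}"
      then have "j \<le> 4 * n + 1" using dp by auto
      then show "coeff p j * integral\<^sup>L lborel (\<lambda>t. t ^ j * E t) = coeff p j * (\<Sum>k=1..2*n+1. wH k * xH k ^ j)"
        using moments[OF analytic momH L xp x0 w0] by (simp add: E_def)
    qed
    also have "\<dots> = (\<Sum>k=1..2*n+1. wH k * poly p (xH k))"
      by (rule poly_rule_sum[symmetric])
    finally show "(LINT t:UNIV|lborel. poly p t * E t) = (\<Sum>k=1..2*n+1. wH k * poly p (xH k))" .
  qed
  have ord: "\<forall>i\<in>{1..<2*n+1}. xH i < xH (i + 1)"
  proof
    fix i assume i: "i \<in> {1..<2*n+1}"
    consider "i < n" | "i = n" | "i = n + 1" | "i > n + 1" by linarith
    then show "xH i < xH (i + 1)"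
    proof cases
      case 1
      define k where "k = n + 1 - i"
      have k: "k \<in> {1..n}" "k - 1 \<in> {1..n}" "k - 1 \<in> {1..<n}" using 1 i by (auto simp: k_def)
      have e1: "i = n + 1 - k" "i + 1 = n + 1 - (k - 1)" using 1 i by (auto simp: k_def)
      have "xL (k - 1) < xL (k - 1 + 1)" using xLmono[OF k(3)] .
      then have "xL (k - 1) < xL k" using k by simp
      then have "sqrt (xL (k - 1)) < sqrt (xL k)" by simp
      moreover have a: "xH (n+1-k) = - sqrt (xL k)" using xp k(1) by blast
      moreover have b: "xH (n+1-(k-1)) = - sqrt (xL (k-1))" using xp k(2) by blast
      ultimately show ?thesis using e1 by (metis neg_less_iff_less)
    next
      case 2
      have "xH n = - sqrt (xL 1)" using xp[rule_format, of 1] n 2 by auto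
      moreover have "0 < sqrt (xL 1)" using xLpos[of 1] n by auto
      ultimately show ?thesis using x0 2 by simp
    next
      case 3
      have "xH (n + 2) = sqrt (xL 1)" using xp[rule_format, of 1] n by (auto simp: numeral_2_eq_2)
      moreover have "0 < sqrt (xL 1)" using xLpos[of 1] n by auto
      ultimately show ?thesis using x0 3 by (simp add: numeral_2_eq_2)
    next
      case 4
      define k where "k = i - n - 1"
      have k: "k \<in> {1..n}" "k + 1 \<in> {1..n}" "k \<in> {1..<n}" using 4 i by (auto simp: k_def)
      have e1: "i = n + 1 + k" "i + 1 = n + 1 + (k + 1)" using 4 i by (auto simp: k_def)
      have "sqrt (xL k) < sqrt (xL (k + 1))" using xLmono[OF k(3)] by simp
      moreover have a: "xH (n+1+k) = sqrt (xL k)" using xp k(1) by blast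
      moreover have b: "xH (n+1+(k+1)) = sqrt (xL (k+1))" using xp k(2) by blast
      ultimately show ?thesis using e1 by metis
    qed
  qed
  define q where "q = (\<Prod>k\<in>{1..n}. [:- xL k, 0, 1:])"
  have poly_q: "poly q t = (\<Prod>k\<in>{1..n}. t\<^sup>2 - xL k)" for t
    by (simp add: q_def poly_prod power2_eq_square algebra_simps)
  have dq: "degree q \<le> 2 * n"
  proof -
    have "degree q \<le> (\<Sum>k\<in>{1..n}. degree [:- xL k, 0, (1::real):])"
      unfolding q_def using degree_prod_sum_le[of "{1..n}" "\<lambda>k. [:- xL k, 0, (1::real):]"]
      by (simp add: o_def)
    also have "\<dots> = 2 * n" by simp
    finally show ?thesis .
  qed
  have q0: "poly q 0 \<noteq> 0" unfolding poly_q using xLpos by (auto simp: prod_zero_iff) (metis atLeastAtMost_iff less_irrefl)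
  then have qnz: "q \<noteq> 0" by auto
  have dqq: "degree (q * q) \<le> 2 * (2 * n + 1) - 1"
    using degree_mult_le[of q q] dq by arith
  have ipos: "integral\<^sup>L lborel (\<lambda>t. (poly q t)\<^sup>2 * E t) > 0"
    by (rule poly_int_pos) (use poly_integral(1)[OF mom, of "q * q"] qnz in \<open>auto simp: E_def power2_eq_square\<close>)
  have "integral\<^sup>L lborel (\<lambda>t. (poly q t)\<^sup>2 * E t) = (LINT t:UNIV|lborel. poly (q * q) t * E t)"
    by (simp add: set_lebesgue_integral_def power2_eq_square)
  also have "\<dots> = (\<Sum>k=1..2*n+1. wH k * poly (q * q) (xH k))"
    using exact[OF dqq] by blast
  also have "\<dots> = wH (n + 1) * (poly q 0)\<^sup>2"
  proof -
    have z: "poly q (xH (n + 1 + k)) = 0 \<and> poly q (xH (n + 1 - k)) = 0" if k: "k \<in> {1..n}" for k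
    proof -
      have "xH (n + 1 + k) = sqrt (xL k)" "xH (n + 1 - k) = - sqrt (xL k)" using xp k by auto
      moreover have "(sqrt (xL k))\<^sup>2 = xL k" using xLpos[OF k] by simp
      ultimately show ?thesis unfolding poly_q using k by (auto simp: prod_zero_iff)
    qed
    show ?thesis unfolding sum_sym[of "\<lambda>k. wH k * poly (q * q) (xH k)"]
      using z x0 by (simp add: power2_eq_square)
  qed
  finally have "wH (n + 1) * (poly q 0)\<^sup>2 > 0" using ipos by simp
  then have w0pos: "wH (n + 1) > 0" using q0 by (simp add: zero_less_mult_iff)
  have wpos: "\<forall>i\<in>{1..2*n+1}. xH i \<in> UNIV \<and> wH i > 0"
  proof
    fix i assume i: "i \<in> {1..2*n+1}"
    consider "i = n + 1" | "i > n + 1" | "i < n + 1" by linarith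
    then show "xH i \<in> UNIV \<and> wH i > 0"
    proof cases
      case 1 then show ?thesis using w0pos by simp
    next
      case 2
      define k where "k = i - n - 1"
      have k: "k \<in> {1..n}" "i = n + 1 + k" using 2 i by (auto simp: k_def)
      then show ?thesis using xp xLpos[OF k(1)] wLpos[OF k(1)] by auto
    next
      case 3
      define k where "k = n + 1 - i"
      have k: "k \<in> {1..n}" "i = n + 1 - k" using 3 i by (auto simp: k_def)
      then show ?thesis using xp xLpos[OF k(1)] wLpos[OF k(1)] by auto
    qed
  qed
  show ?thesis
    unfolding gauss_rule_def using ord wpos exact by (simp add: E_def)
qed



theorem mainTheorem3:
  fixes Q :: "real \<Rightarrow> real" and n :: nat
    and xL wL :: "nat \<Rightarrow> real"
  assumes analytic: "real_analytic_on Q {0..}"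
    and momL: "\<And>j::nat. set_integrable lborel {0..} (\<lambda>x. x ^ j * sqrt x * exp (- Q x))"
    and momH: "\<And>j::nat. integrable lborel (\<lambda>t. t ^ j * exp (- Q (t\<^sup>2)))"
    and n: "n \<ge> 1"
    and L: "gauss_rule (\<lambda>x. sqrt x * exp (- Q x)) {0<..} n xL wL"
  shows "\<forall>xH wH :: nat \<Rightarrow> real.
           gauss_rule (\<lambda>t. exp (- Q (t\<^sup>2))) UNIV (2 * n + 1) xH wH \<longleftrightarrow>
             ((\<forall>k\<in>{1..n}.
                 xH (n + 1 + k) = sqrt (xL k) \<and> wH (n + 1 + k) = wL k / (2 * xL k) \<and>
                 xH (n + 1 - k) = - sqrt (xL k) \<and> wH (n + 1 - k) = wL k / (2 * xL k)) \<and>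
              xH (n + 1) = 0 \<and>
              wH (n + 1) = (LINT t|lborel. exp (- Q (t\<^sup>2)))
                           - (\<Sum>k=1..n. wH (n + 1 + k) + wH (n + 1 - k)))"
proof (intro allI iffI)
  fix xH wH :: "nat \<Rightarrow> real"
  assume "((\<forall>k\<in>{1..n}.
                 xH (n + 1 + k) = sqrt (xL k) \<and> wH (n + 1 + k) = wL k / (2 * xL k) \<and>
                 xH (n + 1 - k) = - sqrt (xL k) \<and> wH (n + 1 - k) = wL k / (2 * xL k)) \<and>
              xH (n + 1) = 0 \<and>
              wH (n + 1) = (LINT t|lborel. exp (- Q (t\<^sup>2)))
                           - (\<Sum>k=1..n. wH (n + 1 + k) + wH (n + 1 - k)))"
  then show "gauss_rule (\<lambda>t. exp (- Q (t\<^sup>2))) UNIV (2 * n + 1) xH wH"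
    using construct[OF analytic momH n L] by blast
next
  fix xH wH :: "nat \<Rightarrow> real"
  assume H: "gauss_rule (\<lambda>t. exp (- Q (t\<^sup>2))) UNIV (2 * n + 1) xH wH"
  define W0 where "W0 = (LINT t|lborel. exp (- Q (t\<^sup>2))) - (\<Sum>k=1..n. wL k / (2 * xL k) + wL k / (2 * xL k))"
  define xC where "xC = (\<lambda>i. if i = n + 1 then 0 else if i > n + 1 then sqrt (xL (i - n - 1))
                          else - sqrt (xL (n + 1 - i)))"
  define wC where "wC = (\<lambda>i. if i = n + 1 then W0 else if i > n + 1 then wL (i - n - 1) / (2 * xL (i - n - 1))
                          else wL (n + 1 - i) / (2 * xL (n + 1 - i)))"
  have xpC: "\<forall>k\<in>{1..n}.
                 xC (n + 1 + k) = sqrt (xL k) \<and> wC (n + 1 + k) = wL k / (2 * xL k) \<and>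
                 xC (n + 1 - k) = - sqrt (xL k) \<and> wC (n + 1 - k) = wL k / (2 * xL k)"
    by (auto simp: xC_def wC_def)
  have x0C: "xC (n + 1) = 0" by (simp add: xC_def)
  have w0C: "wC (n + 1) = (LINT t|lborel. exp (- Q (t\<^sup>2)))
                           - (\<Sum>k=1..n. wC (n + 1 + k) + wC (n + 1 - k))"
  proof -
    have "(\<Sum>k=1..n. wC (n + 1 + k) + wC (n + 1 - k)) = (\<Sum>k=1..n. wL k / (2 * xL k) + wL k / (2 * xL k))"
      using xpC by (intro sum.cong) auto
    then show ?thesis by (simp add: wC_def W0_def)
  qed
  have C: "gauss_rule (\<lambda>t. exp (- Q (t\<^sup>2))) UNIV (2 * n + 1) xC wC"
    by (rule construct[OF analytic momH n L xpC x0C w0C])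
  have eq: "\<And>i. i \<in> {1..2*n+1} \<Longrightarrow> xH i = xC i \<and> wH i = wC i"
    using gauss_unique[OF H C] by blast
  have eqk: "xH (n + 1 + k) = xC (n + 1 + k) \<and> wH (n + 1 + k) = wC (n + 1 + k) \<and>
             xH (n + 1 - k) = xC (n + 1 - k) \<and> wH (n + 1 - k) = wC (n + 1 - k)" if "k \<in> {1..n}" for k
  proof -
    have "n + 1 - k \<in> {1..2*n+1}" "n + 1 + k \<in> {1..2*n+1}" using that by auto
    then show ?thesis using eq[of "n + 1 + k"] eq[of "n + 1 - k"] by blast
  qed
  have eq0: "xH (n + 1) = xC (n + 1) \<and> wH (n + 1) = wC (n + 1)" using eq[of "n + 1"] by auto
  have sumeq: "(\<Sum>k=1..n. wH (n + 1 + k) + wH (n + 1 - k)) = (\<Sum>k=1..n. wC (n + 1 + k) + wC (n + 1 - k))"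
    using eqk by (intro sum.cong) auto
  show "((\<forall>k\<in>{1..n}.
                 xH (n + 1 + k) = sqrt (xL k) \<and> wH (n + 1 + k) = wL k / (2 * xL k) \<and>
                 xH (n + 1 - k) = - sqrt (xL k) \<and> wH (n + 1 - k) = wL k / (2 * xL k)) \<and>
              xH (n + 1) = 0 \<and>
              wH (n + 1) = (LINT t|lborel. exp (- Q (t\<^sup>2)))
                           - (\<Sum>k=1..n. wH (n + 1 + k) + wH (n + 1 - k)))"
    using xpC x0C w0C eqk eq0 sumeq by auto
qed


end
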